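(* $h(3)\leq 5$; that is, every $\mathbb{Z}_3$-colorable graph is $\Gamma'$-colorable for every Abelian group $\Gamma'$ of order at least $5$.
   Context: Graphs are finite, may have multiple edges but no loops. For an Abelian group $\Gamma$, $G$ is $\Gamma$-colorable if for some (equivalently, any) orientation $D$ of $G$ and every $\varphi:E(G)\to\Gamma$ there is $c:V(G)\to\Gamma$ with $c(w)-c(u)\neq\varphi(uw)$ for every directed edge $uw$ of $D$. $h(k)$ is the least number such that whenever a graph is $\Gamma$-colorable for some Abelian group $\Gamma$ of order $k$, it is $\Gamma'$-colorable for every Abelian group $\Gamma'$ of order $|\Gamma'|\geq h(k)$. *)

theory Defs
  imports Main "HOL-Library.Numeral_Type"
begin

text \<open>A finite multigraph without loops, given together with an orientation:
  vertex set V, edge set E, and ends e = (tail, head).  Parallel edges are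
  distinct elements of E with the same ends.\<close>
definition loopless_multigraph :: "'v set \<Rightarrow> 'e set \<Rightarrow> ('e \<Rightarrow> 'v \<times> 'v) \<Rightarrow> bool" where
  "loopless_multigraph V E ends \<longleftrightarrow> finite V \<and> finite E \<and>
     (\<forall>e\<in>E. fst (ends e) \<in> V \<and> snd (ends e) \<in> V \<and> fst (ends e) \<noteq> snd (ends e))"

definition group_colorable ::
  "'v set \<Rightarrow> 'e set \<Rightarrow> ('e \<Rightarrow> 'v \<times> 'v) \<Rightarrow> 'g::ab_group_add itself \<Rightarrow> bool" where
  "group_colorable V E ends (_::'g itself) \<longleftrightarrow>
     (\<forall>\<phi>::'e \<Rightarrow> 'g. \<exists>c::'v \<Rightarrow> 'g.
        \<forall>e\<in>E. c (snd (ends e)) - c (fst (ends e)) \<noteq> \<phi> e)"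

end

theory Submission
  imports Defs
begin

lemma three_cases: "(x::3) = 0 \<or> x = 1 \<or> x = 2"
proof (induct x)
  case (of_int z)
  then have "z = 0 \<or> z = 1 \<or> z = 2" by auto
  then show ?case by auto
qed

lemma all3: "(\<forall>a::3. P a) \<longleftrightarrow> P 0 \<and> P 1 \<and> P 2"
  using three_cases by metis

lemma ex3: "(\<exists>a::3. P a) \<longleftrightarrow> P 0 \<or> P 1 \<or> P 2"
  using three_cases by metis

definition e3 :: "3 \<Rightarrow> nat" where
  "e3 a = (if a = 0 then 0 else if a = 1 then 1 else 2)"

lemma e3_simps [simp]: "e3 0 = 0" "e3 1 = 1" "e3 2 = 2"
  by (simp_all add: e3_def)

fun idx :: "3 list \<Rightarrow> nat" where
  "idx [] = 0"
| "idx (a # xs) = e3 a + 3 * idx xs"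

fun win :: "nat \<Rightarrow> (3 list \<Rightarrow> 3 list \<Rightarrow> bool) \<Rightarrow> bool" where
  "win 0 R = R [] []"
| "win (Suc k) R = (\<exists>p. \<forall>a b. b - a \<noteq> p \<longrightarrow> win k (\<lambda>xs ys. R (a # xs) (b # ys)))"

lemma winI:
  assumes "\<And>a b. b - a \<noteq> p \<Longrightarrow> win k (\<lambda>xs ys. R (a # xs) (b # ys))"
  shows "win (Suc k) R"
  using assms by auto

lemma win_mono:
  "win k R \<Longrightarrow> (\<And>xs ys. R xs ys \<Longrightarrow> R' xs ys) \<Longrightarrow> win k R'"
proof (induct k arbitrary: R R')
  case 0
  then show ?case by simp
next
  case (Suc k)
  from Suc.prems(1) obtain p where p: "\<forall>a b. b - a \<noteq> p \<longrightarrow> win k (\<lambda>xs ys. R (a # xs) (b # ys))"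
    by auto
  show ?case
  proof (rule winI[where p = p])
    fix a b :: 3
    assume "b - a \<noteq> p"
    with p have "win k (\<lambda>xs ys. R (a # xs) (b # ys))" by auto
    then show "win k (\<lambda>xs ys. R' (a # xs) (b # ys))"
      by (rule Suc.hyps) (use Suc.prems(2) in auto)
  qed
qed

lemma win_True: "win k (\<lambda>_ _. True)"
  by (induct k) auto

lemma multi_round:
  assumes col: "group_colorable V E ends TYPE(3)"
  shows "\<forall>e\<in>E. win k (R e) \<Longrightarrow> \<exists>c. \<forall>e\<in>E. R e (c (fst (ends e))) (c (snd (ends e)))"
proof (induct k arbitrary: R)
  case 0
  then show ?case by (intro exI[of _ "\<lambda>_. []"]) auto
next
  case (Suc k)
  define P where "P e = (SOME p. \<forall>a b. b - a \<noteq> p \<longrightarrow> win k (\<lambda>xs ys. R e (a # xs) (b # ys)))" for e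
  have P: "\<forall>a b. b - a \<noteq> P e \<longrightarrow> win k (\<lambda>xs ys. R e (a # xs) (b # ys))" if "e \<in> E" for e
    unfolding P_def by (rule someI_ex) (use Suc.prems that in auto)
  from col obtain c1 :: "'a \<Rightarrow> 3" where c1: "\<forall>e\<in>E. c1 (snd (ends e)) - c1 (fst (ends e)) \<noteq> P e"
    unfolding group_colorable_def by blast
  have "\<forall>e\<in>E. win k (\<lambda>xs ys. R e (c1 (fst (ends e)) # xs) (c1 (snd (ends e)) # ys))"
    using P c1 by blast
  from Suc.hyps[OF this] obtain c2 where
    c2: "\<forall>e\<in>E. R e (c1 (fst (ends e)) # c2 (fst (ends e))) (c1 (snd (ends e)) # c2 (snd (ends e)))"
    by blast
  show ?case by (intro exI[of _ "\<lambda>v. c1 v # c2 v"]) (use c2 in auto)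
qed

lemma colorable_from_win:
  fixes F :: "3 list \<Rightarrow> 'g::ab_group_add"
  assumes col: "group_colorable V E ends TYPE(3)"
    and w: "\<And>\<delta>. win k (\<lambda>xs ys. F ys - F xs \<noteq> \<delta>)"
  shows "group_colorable V E ends TYPE('g)"
  unfolding group_colorable_def
proof
  fix \<phi> :: "'b \<Rightarrow> 'g"
  have "\<forall>e\<in>E. win k (\<lambda>xs ys. F ys - F xs \<noteq> \<phi> e)" using w by blast
  from multi_round[OF col this] obtain c where
    "\<forall>e\<in>E. F (c (snd (ends e))) - F (c (fst (ends e))) \<noteq> \<phi> e" by blast
  then show "\<exists>c::'a \<Rightarrow> 'g. \<forall>e\<in>E. c (snd (ends e)) - c (fst (ends e)) \<noteq> \<phi> e"
    by (intro exI[of _ "\<lambda>v. F (c v)"]) auto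
qed

lemma win_codes:
  fixes \<iota> :: "'c \<Rightarrow> 'g::ab_group_add" and T :: "3 list \<Rightarrow> 'c"
  assumes hom: "\<And>s t. \<iota> s - \<iota> t = \<iota> (cd s t)"
    and nrm: "\<And>s. \<iota> (nr s) = \<iota> s" "\<And>s. nr s \<in> C"
    and inj: "inj_on \<iota> C"
    and games: "\<And>c. c \<in> C \<Longrightarrow> win k (\<lambda>xs ys. nr (cd (T ys) (T xs)) \<noteq> c)"
  shows "win k (\<lambda>xs ys. \<iota> (T ys) - \<iota> (T xs) \<noteq> \<delta>)"
proof (cases "\<delta> \<in> \<iota> ` C")
  case True
  then obtain c where c: "c \<in> C" "\<delta> = \<iota> c" by auto
  show ?thesis
  proof (rule win_mono[OF games[OF c(1)]])
    fix xs ys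
    assume a: "nr (cd (T ys) (T xs)) \<noteq> c"
    have "\<iota> (T ys) - \<iota> (T xs) = \<iota> (nr (cd (T ys) (T xs)))" using hom nrm by simp
    also have "\<dots> \<noteq> \<iota> c" using a inj c(1) nrm(2) by (auto dest: inj_onD)
    finally show "\<iota> (T ys) - \<iota> (T xs) \<noteq> \<delta>" using c by simp
  qed
next
  case False
  show ?thesis
  proof (rule win_mono[OF win_True])
    fix xs ys
    have "\<iota> (T ys) - \<iota> (T xs) = \<iota> (nr (cd (T ys) (T xs)))" using hom nrm by simp
    then show "\<iota> (T ys) - \<iota> (T xs) \<noteq> \<delta>" using False nrm(2) by auto
  qed
qed

primrec nsc :: "nat \<Rightarrow> 'a::ab_group_add \<Rightarrow> 'a" where
  "nsc 0 g = 0"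
| "nsc (Suc n) g = g + nsc n g"

lemma nsc_add: "nsc (m + n) g = nsc m g + nsc n g"
  by (induct m) (simp_all add: add.assoc)

lemma nsc_mult_zero: "nsc n g = 0 \<Longrightarrow> nsc (k * n) g = 0"
  by (induct k) (simp_all add: nsc_add)

lemma nsc_mod: "nsc n g = 0 \<Longrightarrow> nsc (m mod n) g = nsc m g"
proof -
  assume a: "nsc n g = 0"
  have "nsc m g = nsc (m mod n + (m div n) * n) g" by simp
  also have "\<dots> = nsc (m mod n) g + nsc ((m div n) * n) g" by (rule nsc_add)
  also have "\<dots> = nsc (m mod n) g" using nsc_mult_zero[OF a] by simp
  finally show ?thesis by simp
qed

lemma nsc_sub: "nsc 4 g = 0 \<Longrightarrow> nsc i g - nsc j g = nsc (i + 3 * j) g"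
proof -
  assume a: "nsc 4 g = 0"
  have "nsc (i + 3 * j) g + nsc j g = nsc (i + j * 4) g" by (simp add: nsc_add[symmetric] algebra_simps)
  also have "\<dots> = nsc i g" using nsc_mult_zero[OF a] by (simp add: nsc_add)
  finally show ?thesis by (simp add: algebra_simps)
qed

definition cd3 :: "nat \<times> nat \<times> nat \<Rightarrow> nat \<times> nat \<times> nat \<Rightarrow> nat \<times> nat \<times> nat" where
  "cd3 s t = (case s of (i, j, l) \<Rightarrow> case t of (i', j', l') \<Rightarrow> (i + 3 * i', j + 3 * j', l + 3 * l'))"

definition io3 :: "'a::ab_group_add \<Rightarrow> 'a \<Rightarrow> 'a \<Rightarrow> nat \<times> nat \<times> nat \<Rightarrow> 'a" where
  "io3 g1 g2 g3 s = (case s of (i, j, l) \<Rightarrow> nsc i g1 + nsc j g2 + nsc l g3)"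

definition nr3 :: "nat \<Rightarrow> nat \<Rightarrow> nat \<Rightarrow> nat \<times> nat \<times> nat \<Rightarrow> nat \<times> nat \<times> nat" where
  "nr3 m1 m2 m3 s = (case s of (i, j, l) \<Rightarrow> (i mod m1, j mod m2, l mod m3))"

lemma io3_hom:
  assumes "nsc 4 g1 = 0" "nsc 4 g2 = 0" "nsc 4 g3 = 0"
  shows "io3 g1 g2 g3 s - io3 g1 g2 g3 t = io3 g1 g2 g3 (cd3 s t)"
  using nsc_sub[OF assms(1)] nsc_sub[OF assms(2)] nsc_sub[OF assms(3)]
  by (cases s; cases t) (simp add: io3_def cd3_def algebra_simps)

lemma io3_nr:
  assumes "nsc m1 g1 = 0" "nsc m2 g2 = 0" "nsc m3 g3 = 0"
  shows "io3 g1 g2 g3 (nr3 m1 m2 m3 s) = io3 g1 g2 g3 s"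
  using nsc_mod[OF assms(1)] nsc_mod[OF assms(2)] nsc_mod[OF assms(3)]
  by (cases s) (simp add: io3_def nr3_def)


lemma winI':
  assumes "\<forall>a b. b - a \<noteq> p \<longrightarrow> win k (\<lambda>xs ys. R (a # xs) (b # ys))"
  shows "win (Suc k) R"
  using assms by auto

lemma win_1: "win (Suc 0) R = (\<exists>p. \<forall>a b. b - a \<noteq> p \<longrightarrow> R [a] [b])"
  by simp

definition tab42 :: "(nat \<times> nat \<times> nat) list" where
  "tab42 = [(3, 1, 0), (1, 0, 0), (2, 1, 0), (0, 0, 0), (0, 0, 0), (1, 1, 0), (1, 1, 0), (0, 1, 0), (1, 0, 0)]"

definition T42 :: "3 list \<Rightarrow> nat \<times> nat \<times> nat" where "T42 xs = tab42 ! idx xs"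

lemma g42_0: "win (Suc (Suc 0)) (\<lambda>xs ys. nr3 4 2 1 (cd3 (T42 ys) (T42 xs)) \<noteq> (0, 0, 0))"
  apply (rule winI'[where p = 1])
  apply (simp add: all3 ex3 win_1 T42_def tab42_def nr3_def cd3_def)
  done

lemma g42_1: "win (Suc (Suc 0)) (\<lambda>xs ys. nr3 4 2 1 (cd3 (T42 ys) (T42 xs)) \<noteq> (1, 0, 0))"
  apply (rule winI'[where p = 1])
  apply (simp add: all3 ex3 win_1 T42_def tab42_def nr3_def cd3_def)
  done

lemma g42_2: "win (Suc (Suc 0)) (\<lambda>xs ys. nr3 4 2 1 (cd3 (T42 ys) (T42 xs)) \<noteq> (2, 0, 0))"
  apply (rule winI'[where p = 0])
  apply (simp add: all3 ex3 win_1 T42_def tab42_def nr3_def cd3_def)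
  done

lemma g42_3: "win (Suc (Suc 0)) (\<lambda>xs ys. nr3 4 2 1 (cd3 (T42 ys) (T42 xs)) \<noteq> (3, 0, 0))"
  apply (rule winI'[where p = 2])
  apply (simp add: all3 ex3 win_1 T42_def tab42_def nr3_def cd3_def)
  done

lemma g42_4: "win (Suc (Suc 0)) (\<lambda>xs ys. nr3 4 2 1 (cd3 (T42 ys) (T42 xs)) \<noteq> (0, 1, 0))"
  apply (rule winI'[where p = 0])
  apply (simp add: all3 ex3 win_1 T42_def tab42_def nr3_def cd3_def)
  done

lemma g42_5: "win (Suc (Suc 0)) (\<lambda>xs ys. nr3 4 2 1 (cd3 (T42 ys) (T42 xs)) \<noteq> (1, 1, 0))"
  apply (rule winI'[where p = 0])
  apply (simp add: all3 ex3 win_1 T42_def tab42_def nr3_def cd3_def)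
  done

lemma g42_6: "win (Suc (Suc 0)) (\<lambda>xs ys. nr3 4 2 1 (cd3 (T42 ys) (T42 xs)) \<noteq> (2, 1, 0))"
  apply (rule winI'[where p = 0])
  apply (simp add: all3 ex3 win_1 T42_def tab42_def nr3_def cd3_def)
  done

lemma g42_7: "win (Suc (Suc 0)) (\<lambda>xs ys. nr3 4 2 1 (cd3 (T42 ys) (T42 xs)) \<noteq> (3, 1, 0))"
  apply (rule winI'[where p = 0])
  apply (simp add: all3 ex3 win_1 T42_def tab42_def nr3_def cd3_def)
  done



definition tab8 :: "(nat \<times> nat \<times> nat) list" where
  "tab8 = [(0, 1, 0), (0, 1, 0), (1, 1, 1), (0, 0, 1), (1, 0, 1), (1, 0, 1), (0, 1, 0), (0, 0, 1), (0, 0, 0), (0, 0, 0), (0, 1, 1), (1, 0, 0), (0, 0, 0), (0, 1, 0), (0, 1, 0), (0, 0, 0), (1, 1, 0), (0, 0, 1), (0, 0, 1), (1, 0, 0), (0, 0, 0), (1, 1, 0), (1, 0, 0), (0, 0, 1), (1, 0, 1), (1, 1, 1), (1, 0, 0)]"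

definition T8 :: "3 list \<Rightarrow> nat \<times> nat \<times> nat" where "T8 xs = tab8 ! idx xs"

lemma g8_0_01: "win (Suc (Suc 0)) (\<lambda>xs ys. nr3 2 2 2 (cd3 (T8 (1 # ys)) (T8 (0 # xs))) \<noteq> (0, 0, 0))"
  apply (rule winI'[where p = 1])
  apply (simp add: all3 ex3 win_1 T8_def tab8_def nr3_def cd3_def)
  done

lemma g8_0_02: "win (Suc (Suc 0)) (\<lambda>xs ys. nr3 2 2 2 (cd3 (T8 (2 # ys)) (T8 (0 # xs))) \<noteq> (0, 0, 0))"
  apply (rule winI'[where p = 1])
  apply (simp add: all3 ex3 win_1 T8_def tab8_def nr3_def cd3_def)
  done

lemma g8_0_10: "win (Suc (Suc 0)) (\<lambda>xs ys. nr3 2 2 2 (cd3 (T8 (0 # ys)) (T8 (1 # xs))) \<noteq> (0, 0, 0))"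
  apply (rule winI'[where p = 2])
  apply (simp add: all3 ex3 win_1 T8_def tab8_def nr3_def cd3_def)
  done

lemma g8_0_12: "win (Suc (Suc 0)) (\<lambda>xs ys. nr3 2 2 2 (cd3 (T8 (2 # ys)) (T8 (1 # xs))) \<noteq> (0, 0, 0))"
  apply (rule winI'[where p = 1])
  apply (simp add: all3 ex3 win_1 T8_def tab8_def nr3_def cd3_def)
  done

lemma g8_0_20: "win (Suc (Suc 0)) (\<lambda>xs ys. nr3 2 2 2 (cd3 (T8 (0 # ys)) (T8 (2 # xs))) \<noteq> (0, 0, 0))"
  apply (rule winI'[where p = 2])
  apply (simp add: all3 ex3 win_1 T8_def tab8_def nr3_def cd3_def)
  done

lemma g8_0_21: "win (Suc (Suc 0)) (\<lambda>xs ys. nr3 2 2 2 (cd3 (T8 (1 # ys)) (T8 (2 # xs))) \<noteq> (0, 0, 0))"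
  apply (rule winI'[where p = 1])
  apply (simp add: all3 ex3 win_1 T8_def tab8_def nr3_def cd3_def)
  done

lemma g8_0: "win (Suc (Suc (Suc 0))) (\<lambda>xs ys. nr3 2 2 2 (cd3 (T8 ys) (T8 xs)) \<noteq> (0, 0, 0))"
  apply (rule winI'[where p = 0])
  apply (simp only: all3)
  apply (intro conjI impI; (rule g8_0_01 g8_0_02 g8_0_10 g8_0_12 g8_0_20 g8_0_21)?; simp)
  done

lemma g8_1_01: "win (Suc (Suc 0)) (\<lambda>xs ys. nr3 2 2 2 (cd3 (T8 (1 # ys)) (T8 (0 # xs))) \<noteq> (1, 0, 0))"
  apply (rule winI'[where p = 0])
  apply (simp add: all3 ex3 win_1 T8_def tab8_def nr3_def cd3_def)
  done

lemma g8_1_02: "win (Suc (Suc 0)) (\<lambda>xs ys. nr3 2 2 2 (cd3 (T8 (2 # ys)) (T8 (0 # xs))) \<noteq> (1, 0, 0))"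
  apply (rule winI'[where p = 0])
  apply (simp add: all3 ex3 win_1 T8_def tab8_def nr3_def cd3_def)
  done

lemma g8_1_10: "win (Suc (Suc 0)) (\<lambda>xs ys. nr3 2 2 2 (cd3 (T8 (0 # ys)) (T8 (1 # xs))) \<noteq> (1, 0, 0))"
  apply (rule winI'[where p = 0])
  apply (simp add: all3 ex3 win_1 T8_def tab8_def nr3_def cd3_def)
  done

lemma g8_1_12: "win (Suc (Suc 0)) (\<lambda>xs ys. nr3 2 2 2 (cd3 (T8 (2 # ys)) (T8 (1 # xs))) \<noteq> (1, 0, 0))"
  apply (rule winI'[where p = 0])
  apply (simp add: all3 ex3 win_1 T8_def tab8_def nr3_def cd3_def)
  done

lemma g8_1_20: "win (Suc (Suc 0)) (\<lambda>xs ys. nr3 2 2 2 (cd3 (T8 (0 # ys)) (T8 (2 # xs))) \<noteq> (1, 0, 0))"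
  apply (rule winI'[where p = 0])
  apply (simp add: all3 ex3 win_1 T8_def tab8_def nr3_def cd3_def)
  done

lemma g8_1_21: "win (Suc (Suc 0)) (\<lambda>xs ys. nr3 2 2 2 (cd3 (T8 (1 # ys)) (T8 (2 # xs))) \<noteq> (1, 0, 0))"
  apply (rule winI'[where p = 0])
  apply (simp add: all3 ex3 win_1 T8_def tab8_def nr3_def cd3_def)
  done

lemma g8_1: "win (Suc (Suc (Suc 0))) (\<lambda>xs ys. nr3 2 2 2 (cd3 (T8 ys) (T8 xs)) \<noteq> (1, 0, 0))"
  apply (rule winI'[where p = 0])
  apply (simp only: all3)
  apply (intro conjI impI; (rule g8_1_01 g8_1_02 g8_1_10 g8_1_12 g8_1_20 g8_1_21)?; simp)
  done

lemma g8_2_01: "win (Suc (Suc 0)) (\<lambda>xs ys. nr3 2 2 2 (cd3 (T8 (1 # ys)) (T8 (0 # xs))) \<noteq> (0, 1, 0))"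
  apply (rule winI'[where p = 2])
  apply (simp add: all3 ex3 win_1 T8_def tab8_def nr3_def cd3_def)
  done

lemma g8_2_02: "win (Suc (Suc 0)) (\<lambda>xs ys. nr3 2 2 2 (cd3 (T8 (2 # ys)) (T8 (0 # xs))) \<noteq> (0, 1, 0))"
  apply (rule winI'[where p = 1])
  apply (simp add: all3 ex3 win_1 T8_def tab8_def nr3_def cd3_def)
  done

lemma g8_2_10: "win (Suc (Suc 0)) (\<lambda>xs ys. nr3 2 2 2 (cd3 (T8 (0 # ys)) (T8 (1 # xs))) \<noteq> (0, 1, 0))"
  apply (rule winI'[where p = 1])
  apply (simp add: all3 ex3 win_1 T8_def tab8_def nr3_def cd3_def)
  done

lemma g8_2_12: "win (Suc (Suc 0)) (\<lambda>xs ys. nr3 2 2 2 (cd3 (T8 (2 # ys)) (T8 (1 # xs))) \<noteq> (0, 1, 0))"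
  apply (rule winI'[where p = 2])
  apply (simp add: all3 ex3 win_1 T8_def tab8_def nr3_def cd3_def)
  done

lemma g8_2_20: "win (Suc (Suc 0)) (\<lambda>xs ys. nr3 2 2 2 (cd3 (T8 (0 # ys)) (T8 (2 # xs))) \<noteq> (0, 1, 0))"
  apply (rule winI'[where p = 2])
  apply (simp add: all3 ex3 win_1 T8_def tab8_def nr3_def cd3_def)
  done

lemma g8_2_21: "win (Suc (Suc 0)) (\<lambda>xs ys. nr3 2 2 2 (cd3 (T8 (1 # ys)) (T8 (2 # xs))) \<noteq> (0, 1, 0))"
  apply (rule winI'[where p = 1])
  apply (simp add: all3 ex3 win_1 T8_def tab8_def nr3_def cd3_def)
  done

lemma g8_2: "win (Suc (Suc (Suc 0))) (\<lambda>xs ys. nr3 2 2 2 (cd3 (T8 ys) (T8 xs)) \<noteq> (0, 1, 0))"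
  apply (rule winI'[where p = 0])
  apply (simp only: all3)
  apply (intro conjI impI; (rule g8_2_01 g8_2_02 g8_2_10 g8_2_12 g8_2_20 g8_2_21)?; simp)
  done

lemma g8_3_01: "win (Suc (Suc 0)) (\<lambda>xs ys. nr3 2 2 2 (cd3 (T8 (1 # ys)) (T8 (0 # xs))) \<noteq> (1, 1, 0))"
  apply (rule winI'[where p = 1])
  apply (simp add: all3 ex3 win_1 T8_def tab8_def nr3_def cd3_def)
  done

lemma g8_3_02: "win (Suc (Suc 0)) (\<lambda>xs ys. nr3 2 2 2 (cd3 (T8 (2 # ys)) (T8 (0 # xs))) \<noteq> (1, 1, 0))"
  apply (rule winI'[where p = 1])
  apply (simp add: all3 ex3 win_1 T8_def tab8_def nr3_def cd3_def)
  done

lemma g8_3_10: "win (Suc (Suc 0)) (\<lambda>xs ys. nr3 2 2 2 (cd3 (T8 (0 # ys)) (T8 (1 # xs))) \<noteq> (1, 1, 0))"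
  apply (rule winI'[where p = 2])
  apply (simp add: all3 ex3 win_1 T8_def tab8_def nr3_def cd3_def)
  done

lemma g8_3_12: "win (Suc (Suc 0)) (\<lambda>xs ys. nr3 2 2 2 (cd3 (T8 (2 # ys)) (T8 (1 # xs))) \<noteq> (1, 1, 0))"
  apply (rule winI'[where p = 1])
  apply (simp add: all3 ex3 win_1 T8_def tab8_def nr3_def cd3_def)
  done

lemma g8_3_20: "win (Suc (Suc 0)) (\<lambda>xs ys. nr3 2 2 2 (cd3 (T8 (0 # ys)) (T8 (2 # xs))) \<noteq> (1, 1, 0))"
  apply (rule winI'[where p = 0])
  apply (simp add: all3 ex3 win_1 T8_def tab8_def nr3_def cd3_def)
  done

lemma g8_3_21: "win (Suc (Suc 0)) (\<lambda>xs ys. nr3 2 2 2 (cd3 (T8 (1 # ys)) (T8 (2 # xs))) \<noteq> (1, 1, 0))"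
  apply (rule winI'[where p = 2])
  apply (simp add: all3 ex3 win_1 T8_def tab8_def nr3_def cd3_def)
  done

lemma g8_3: "win (Suc (Suc (Suc 0))) (\<lambda>xs ys. nr3 2 2 2 (cd3 (T8 ys) (T8 xs)) \<noteq> (1, 1, 0))"
  apply (rule winI'[where p = 0])
  apply (simp only: all3)
  apply (intro conjI impI; (rule g8_3_01 g8_3_02 g8_3_10 g8_3_12 g8_3_20 g8_3_21)?; simp)
  done

lemma g8_4_01: "win (Suc (Suc 0)) (\<lambda>xs ys. nr3 2 2 2 (cd3 (T8 (1 # ys)) (T8 (0 # xs))) \<noteq> (0, 0, 1))"
  apply (rule winI'[where p = 1])
  apply (simp add: all3 ex3 win_1 T8_def tab8_def nr3_def cd3_def)
  done

lemma g8_4_02: "win (Suc (Suc 0)) (\<lambda>xs ys. nr3 2 2 2 (cd3 (T8 (2 # ys)) (T8 (0 # xs))) \<noteq> (0, 0, 1))"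
  apply (rule winI'[where p = 2])
  apply (simp add: all3 ex3 win_1 T8_def tab8_def nr3_def cd3_def)
  done

lemma g8_4_10: "win (Suc (Suc 0)) (\<lambda>xs ys. nr3 2 2 2 (cd3 (T8 (0 # ys)) (T8 (1 # xs))) \<noteq> (0, 0, 1))"
  apply (rule winI'[where p = 2])
  apply (simp add: all3 ex3 win_1 T8_def tab8_def nr3_def cd3_def)
  done

lemma g8_4_12: "win (Suc (Suc 0)) (\<lambda>xs ys. nr3 2 2 2 (cd3 (T8 (2 # ys)) (T8 (1 # xs))) \<noteq> (0, 0, 1))"
  apply (rule winI'[where p = 1])
  apply (simp add: all3 ex3 win_1 T8_def tab8_def nr3_def cd3_def)
  done

lemma g8_4_20: "win (Suc (Suc 0)) (\<lambda>xs ys. nr3 2 2 2 (cd3 (T8 (0 # ys)) (T8 (2 # xs))) \<noteq> (0, 0, 1))"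
  apply (rule winI'[where p = 1])
  apply (simp add: all3 ex3 win_1 T8_def tab8_def nr3_def cd3_def)
  done

lemma g8_4_21: "win (Suc (Suc 0)) (\<lambda>xs ys. nr3 2 2 2 (cd3 (T8 (1 # ys)) (T8 (2 # xs))) \<noteq> (0, 0, 1))"
  apply (rule winI'[where p = 2])
  apply (simp add: all3 ex3 win_1 T8_def tab8_def nr3_def cd3_def)
  done

lemma g8_4: "win (Suc (Suc (Suc 0))) (\<lambda>xs ys. nr3 2 2 2 (cd3 (T8 ys) (T8 xs)) \<noteq> (0, 0, 1))"
  apply (rule winI'[where p = 0])
  apply (simp only: all3)
  apply (intro conjI impI; (rule g8_4_01 g8_4_02 g8_4_10 g8_4_12 g8_4_20 g8_4_21)?; simp)
  done

lemma g8_5_01: "win (Suc (Suc 0)) (\<lambda>xs ys. nr3 2 2 2 (cd3 (T8 (1 # ys)) (T8 (0 # xs))) \<noteq> (1, 0, 1))"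
  apply (rule winI'[where p = 1])
  apply (simp add: all3 ex3 win_1 T8_def tab8_def nr3_def cd3_def)
  done

lemma g8_5_02: "win (Suc (Suc 0)) (\<lambda>xs ys. nr3 2 2 2 (cd3 (T8 (2 # ys)) (T8 (0 # xs))) \<noteq> (1, 0, 1))"
  apply (rule winI'[where p = 0])
  apply (simp add: all3 ex3 win_1 T8_def tab8_def nr3_def cd3_def)
  done

lemma g8_5_10: "win (Suc (Suc 0)) (\<lambda>xs ys. nr3 2 2 2 (cd3 (T8 (0 # ys)) (T8 (1 # xs))) \<noteq> (1, 0, 1))"
  apply (rule winI'[where p = 2])
  apply (simp add: all3 ex3 win_1 T8_def tab8_def nr3_def cd3_def)
  done

lemma g8_5_12: "win (Suc (Suc 0)) (\<lambda>xs ys. nr3 2 2 2 (cd3 (T8 (2 # ys)) (T8 (1 # xs))) \<noteq> (1, 0, 1))"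
  apply (rule winI'[where p = 1])
  apply (simp add: all3 ex3 win_1 T8_def tab8_def nr3_def cd3_def)
  done

lemma g8_5_20: "win (Suc (Suc 0)) (\<lambda>xs ys. nr3 2 2 2 (cd3 (T8 (0 # ys)) (T8 (2 # xs))) \<noteq> (1, 0, 1))"
  apply (rule winI'[where p = 0])
  apply (simp add: all3 ex3 win_1 T8_def tab8_def nr3_def cd3_def)
  done

lemma g8_5_21: "win (Suc (Suc 0)) (\<lambda>xs ys. nr3 2 2 2 (cd3 (T8 (1 # ys)) (T8 (2 # xs))) \<noteq> (1, 0, 1))"
  apply (rule winI'[where p = 2])
  apply (simp add: all3 ex3 win_1 T8_def tab8_def nr3_def cd3_def)
  done

lemma g8_5: "win (Suc (Suc (Suc 0))) (\<lambda>xs ys. nr3 2 2 2 (cd3 (T8 ys) (T8 xs)) \<noteq> (1, 0, 1))"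
  apply (rule winI'[where p = 0])
  apply (simp only: all3)
  apply (intro conjI impI; (rule g8_5_01 g8_5_02 g8_5_10 g8_5_12 g8_5_20 g8_5_21)?; simp)
  done

lemma g8_6_01: "win (Suc (Suc 0)) (\<lambda>xs ys. nr3 2 2 2 (cd3 (T8 (1 # ys)) (T8 (0 # xs))) \<noteq> (0, 1, 1))"
  apply (rule winI'[where p = 0])
  apply (simp add: all3 ex3 win_1 T8_def tab8_def nr3_def cd3_def)
  done

lemma g8_6_02: "win (Suc (Suc 0)) (\<lambda>xs ys. nr3 2 2 2 (cd3 (T8 (2 # ys)) (T8 (0 # xs))) \<noteq> (0, 1, 1))"
  apply (rule winI'[where p = 2])
  apply (simp add: all3 ex3 win_1 T8_def tab8_def nr3_def cd3_def)
  done

lemma g8_6_10: "win (Suc (Suc 0)) (\<lambda>xs ys. nr3 2 2 2 (cd3 (T8 (0 # ys)) (T8 (1 # xs))) \<noteq> (0, 1, 1))"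
  apply (rule winI'[where p = 0])
  apply (simp add: all3 ex3 win_1 T8_def tab8_def nr3_def cd3_def)
  done

lemma g8_6_12: "win (Suc (Suc 0)) (\<lambda>xs ys. nr3 2 2 2 (cd3 (T8 (2 # ys)) (T8 (1 # xs))) \<noteq> (0, 1, 1))"
  apply (rule winI'[where p = 2])
  apply (simp add: all3 ex3 win_1 T8_def tab8_def nr3_def cd3_def)
  done

lemma g8_6_20: "win (Suc (Suc 0)) (\<lambda>xs ys. nr3 2 2 2 (cd3 (T8 (0 # ys)) (T8 (2 # xs))) \<noteq> (0, 1, 1))"
  apply (rule winI'[where p = 1])
  apply (simp add: all3 ex3 win_1 T8_def tab8_def nr3_def cd3_def)
  done

lemma g8_6_21: "win (Suc (Suc 0)) (\<lambda>xs ys. nr3 2 2 2 (cd3 (T8 (1 # ys)) (T8 (2 # xs))) \<noteq> (0, 1, 1))"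
  apply (rule winI'[where p = 1])
  apply (simp add: all3 ex3 win_1 T8_def tab8_def nr3_def cd3_def)
  done

lemma g8_6: "win (Suc (Suc (Suc 0))) (\<lambda>xs ys. nr3 2 2 2 (cd3 (T8 ys) (T8 xs)) \<noteq> (0, 1, 1))"
  apply (rule winI'[where p = 0])
  apply (simp only: all3)
  apply (intro conjI impI; (rule g8_6_01 g8_6_02 g8_6_10 g8_6_12 g8_6_20 g8_6_21)?; simp)
  done

lemma g8_7_01: "win (Suc (Suc 0)) (\<lambda>xs ys. nr3 2 2 2 (cd3 (T8 (1 # ys)) (T8 (0 # xs))) \<noteq> (1, 1, 1))"
  apply (rule winI'[where p = 2])
  apply (simp add: all3 ex3 win_1 T8_def tab8_def nr3_def cd3_def)
  done

lemma g8_7_02: "win (Suc (Suc 0)) (\<lambda>xs ys. nr3 2 2 2 (cd3 (T8 (2 # ys)) (T8 (0 # xs))) \<noteq> (1, 1, 1))"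
  apply (rule winI'[where p = 2])
  apply (simp add: all3 ex3 win_1 T8_def tab8_def nr3_def cd3_def)
  done

lemma g8_7_10: "win (Suc (Suc 0)) (\<lambda>xs ys. nr3 2 2 2 (cd3 (T8 (0 # ys)) (T8 (1 # xs))) \<noteq> (1, 1, 1))"
  apply (rule winI'[where p = 1])
  apply (simp add: all3 ex3 win_1 T8_def tab8_def nr3_def cd3_def)
  done

lemma g8_7_12: "win (Suc (Suc 0)) (\<lambda>xs ys. nr3 2 2 2 (cd3 (T8 (2 # ys)) (T8 (1 # xs))) \<noteq> (1, 1, 1))"
  apply (rule winI'[where p = 0])
  apply (simp add: all3 ex3 win_1 T8_def tab8_def nr3_def cd3_def)
  done

lemma g8_7_20: "win (Suc (Suc 0)) (\<lambda>xs ys. nr3 2 2 2 (cd3 (T8 (0 # ys)) (T8 (2 # xs))) \<noteq> (1, 1, 1))"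
  apply (rule winI'[where p = 1])
  apply (simp add: all3 ex3 win_1 T8_def tab8_def nr3_def cd3_def)
  done

lemma g8_7_21: "win (Suc (Suc 0)) (\<lambda>xs ys. nr3 2 2 2 (cd3 (T8 (1 # ys)) (T8 (2 # xs))) \<noteq> (1, 1, 1))"
  apply (rule winI'[where p = 0])
  apply (simp add: all3 ex3 win_1 T8_def tab8_def nr3_def cd3_def)
  done

lemma g8_7: "win (Suc (Suc (Suc 0))) (\<lambda>xs ys. nr3 2 2 2 (cd3 (T8 ys) (T8 xs)) \<noteq> (1, 1, 1))"
  apply (rule winI'[where p = 0])
  apply (simp only: all3)
  apply (intro conjI impI; (rule g8_7_01 g8_7_02 g8_7_10 g8_7_12 g8_7_20 g8_7_21)?; simp)
  done


lemma card_ins_le: "finite A \<Longrightarrow> card (insert x A) \<le> Suc (card A)"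
  by (simp add: card_insert_if)

lemma card4: "card {a, b, c, d} \<le> 4"
proof -
  have "card {d} \<le> 1" by simp
  then have "card {c, d} \<le> 2" using card_ins_le[of "{d}" c] by simp
  then have "card {b, c, d} \<le> 3" using card_ins_le[of "{c, d}" b] by simp
  then show ?thesis using card_ins_le[of "{b, c, d}" a] by simp
qed

lemma outside:
  fixes S :: "'g::finite set"
  assumes "card S < CARD('g)"
  shows "\<exists>x. x \<notin> S"
proof (rule ccontr)
  assume "\<not> (\<exists>x. x \<notin> S)"
  then have "S = UNIV" by auto
  then show False using assms by simp
qed

lemma outside4:
  assumes "5 \<le> CARD('g::finite)"
  shows "\<exists>x::'g. x \<noteq> a \<and> x \<noteq> b \<and> x \<noteq> c \<and> x \<noteq> d"
proof -
  have "card {a, b, c, d} < CARD('g)" using card4[of a b c d] assms by simp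
  from outside[OF this] show ?thesis by auto
qed

lemma caseA:
  fixes g :: "'g::ab_group_add"
  assumes g4: "g + g + g + g \<noteq> 0" and col: "group_colorable V E ends TYPE(3)"
  shows "group_colorable V E ends TYPE('g)"
proof -
  define emb where "emb a = (if a = (0::3) then 0 else if a = 1 then g else g + g)" for a
  define F where "F xs = emb (hd xs)" for xs
  have f1: "g + g \<noteq> 0"
  proof
    assume "g + g = 0"
    then have "g + g + g + g = 0" by simp
    then show False using g4 by simp
  qed
  have f0: "g \<noteq> 0" using f1 by auto
  have f2: "- g \<noteq> g"
  proof
    assume "- g = g"
    then have "g + g = 0" by (simp only: neg_eq_iff_add_eq_0)
    then show False using f1 by simp
  qed
  have f3: "g + g \<noteq> - (g + g)"
  proof
    assume "g + g = - (g + g)"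
    then have "(g + g) + (g + g) = 0" by (metis eq_neg_iff_add_eq_0)
    then show False using g4 by (simp add: add.assoc)
  qed
  have f4: "g + g \<noteq> g" "g \<noteq> g + g" using f0 by auto
  have f5: "- g \<noteq> - (g + g)" using f4 by simp
  have f6: "- g \<noteq> 0" "- (g + g) \<noteq> 0" using f0 f1 by (simp_all only: neg_equal_0_iff_equal not_False_eq_True)
  have w: "win (Suc 0) (\<lambda>xs ys. F ys - F xs \<noteq> \<delta>)" for \<delta>
  proof (cases "\<delta> = g \<or> \<delta> = - (g + g)")
    case True
    show ?thesis
    proof (rule winI'[where p = 1])
      show "\<forall>a b. b - a \<noteq> 1 \<longrightarrow> win 0 (\<lambda>xs ys. F (b # ys) - F (a # xs) \<noteq> \<delta>)"
        unfolding all3 using True f0 f1 f2 f3 f4 f5 f6 by (simp add: F_def emb_def) (elim disjE; simp)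
    qed
  next
    case nT: False
    show ?thesis
    proof (cases "\<delta> = - g \<or> \<delta> = g + g")
      case True
      show ?thesis
      proof (rule winI'[where p = 2])
        show "\<forall>a b. b - a \<noteq> 2 \<longrightarrow> win 0 (\<lambda>xs ys. F (b # ys) - F (a # xs) \<noteq> \<delta>)"
          unfolding all3 using True nT f0 f1 f2 f3 f4 f5 f6 by (simp add: F_def emb_def) (elim disjE; simp)
      qed
    next
      case False
      show ?thesis
      proof (rule winI'[where p = 0])
        show "\<forall>a b. b - a \<noteq> 0 \<longrightarrow> win 0 (\<lambda>xs ys. F (b # ys) - F (a # xs) \<noteq> \<delta>)"
          unfolding all3 using False nT by (simp add: F_def emb_def) (metis)
      qed
    qed
  qed
  show ?thesis by (rule colorable_from_win[OF col w])
qed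

lemma C1_cases:
  assumes "c \<in> {(i, j, l). i < (4::nat) \<and> j < (2::nat) \<and> l < (1::nat)}"
  shows "c = (0, 0, 0) \<or> c = (1, 0, 0) \<or> c = (2, 0, 0) \<or> c = (3, 0, 0) \<or>
   c = (0, 1, 0) \<or> c = (1, 1, 0) \<or> c = (2, 1, 0) \<or> c = (3, 1, 0)"
proof -
  obtain i j l where c: "c = (i, j, l)" by (cases c)
  with assms have "i < 4" "j < 2" "l < 1" by auto
  then have "i = 0 \<or> i = 1 \<or> i = 2 \<or> i = 3" "j = 0 \<or> j = 1" "l = 0" by auto
  then show ?thesis using c by blast
qed

lemma C2_cases:
  assumes "c \<in> {(i, j, l). i < (2::nat) \<and> j < (2::nat) \<and> l < (2::nat)}"
  shows "c = (0, 0, 0) \<or> c = (1, 0, 0) \<or> c = (0, 1, 0) \<or> c = (1, 1, 0) \<or>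
   c = (0, 0, 1) \<or> c = (1, 0, 1) \<or> c = (0, 1, 1) \<or> c = (1, 1, 1)"
proof -
  obtain i j l where c: "c = (i, j, l)" by (cases c)
  with assms have "i < 2" "j < 2" "l < 2" by auto
  then have "i = 0 \<or> i = 1" "j = 0 \<or> j = 1" "l = 0 \<or> l = 1" by auto
  then show ?thesis using c by blast
qed

lemma nsc_num: "nsc 1 g = g" "nsc 2 g = g + g" "nsc 3 g = g + (g + g)" "nsc 4 g = g + (g + (g + g))"
  by (simp_all add: numeral_eq_Suc)

lemma caseB1:
  fixes g h :: "'g::ab_group_add"
  assumes all4: "\<And>x::'g. x + x + x + x = 0" and g2: "g + g \<noteq> 0" and h2: "h + h = 0"
    and hn: "h \<noteq> 0" "h \<noteq> g" "h \<noteq> g + g" "h \<noteq> g + g + g"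
    and col: "group_colorable V E ends TYPE(3)"
  shows "group_colorable V E ends TYPE('g)"
proof -
  define C where "C = {(i, j, l). i < (4::nat) \<and> j < (2::nat) \<and> l < (1::nat)}"
  have n4: "nsc 4 x = 0" for x :: 'g using all4[of x] by (simp add: nsc_num add.assoc)
  have n2: "nsc 2 h = 0" using h2 by (simp add: nsc_num)
  have n1: "nsc 1 (0::'g) = 0" by (simp add: nsc_num)
  have hom: "io3 g h 0 s - io3 g h 0 t = io3 g h 0 (cd3 s t)" for s t
    by (rule io3_hom[OF n4 n4 n4])
  have nrm: "io3 g h 0 (nr3 4 2 1 s) = io3 g h 0 s" for s
    by (rule io3_nr[OF n4 n2 n1])
  have nrC: "nr3 4 2 1 s \<in> C" for s by (cases s) (simp add: nr3_def C_def)
  have g0: "g \<noteq> 0" using g2 by auto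
  have a1: "- g = g + (g + g)" by (simp only: neg_eq_iff_add_eq_0) (use all4[of g] in \<open>simp add: add.assoc\<close>)
  have a2: "- (g + g) = g + g" by (simp only: neg_eq_iff_add_eq_0) (use all4[of g] in \<open>simp add: add.assoc\<close>)
  have a3: "- (g + (g + g)) = g" by (simp only: neg_eq_iff_add_eq_0) (use all4[of g] in \<open>simp add: add.assoc\<close>)
  have a4: "g + (g + g) \<noteq> 0"
  proof
    assume "g + (g + g) = 0"
    then have "g = 0" using a3 by (metis neg_0_equal_iff_equal)
    then show False using g0 by simp
  qed
  have zero: "c = (0, 0, 0)" if "c \<in> C" "io3 g h 0 c = 0" for c
  proof -
    from C1_cases[OF that(1)[unfolded C_def]] show ?thesis
    proof (elim disjE)
      assume "c = (1, 1, 0)"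
      with that(2) have "g + h = 0" by (simp add: io3_def nsc_num)
      then have "h = - g" by (simp add: add_eq_0_iff)
      then show ?thesis using a1 hn by (simp add: add.assoc)
    next
      assume "c = (2, 1, 0)"
      with that(2) have "(g + g) + h = 0" by (simp add: io3_def nsc_num)
      then have "h = - (g + g)" by (simp add: add_eq_0_iff)
      then show ?thesis using a2 hn by simp
    next
      assume "c = (3, 1, 0)"
      with that(2) have "(g + (g + g)) + h = 0" by (simp add: io3_def nsc_num)
      then have "h = - (g + (g + g))" by (simp add: add_eq_0_iff)
      then show ?thesis using a3 hn by simp
    qed (use that(2) g0 g2 a4 hn in \<open>simp_all add: io3_def nsc_num\<close>)
  qed
  have inj: "inj_on (io3 g h 0) C"
  proof (rule inj_onI)
    fix s t assume s: "s \<in> C" and t: "t \<in> C" and eq: "io3 g h 0 s = io3 g h 0 t"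
    have "io3 g h 0 (nr3 4 2 1 (cd3 s t)) = io3 g h 0 (cd3 s t)" by (rule nrm)
    also have "\<dots> = io3 g h 0 s - io3 g h 0 t" by (rule hom[symmetric])
    also have "\<dots> = 0" using eq by simp
    finally have "io3 g h 0 (nr3 4 2 1 (cd3 s t)) = 0" .
    then have "nr3 4 2 1 (cd3 s t) = (0, 0, 0)" using zero nrC by blast
    then show "s = t" using C1_cases[OF s[unfolded C_def]] C1_cases[OF t[unfolded C_def]] by (auto simp: nr3_def cd3_def)
  qed
  have games: "win (Suc (Suc 0)) (\<lambda>xs ys. nr3 4 2 1 (cd3 (T42 ys) (T42 xs)) \<noteq> c)" if "c \<in> C" for c
    using C1_cases[OF that[unfolded C_def]] by (elim disjE; simp only: g42_0 g42_1 g42_2 g42_3 g42_4 g42_5 g42_6 g42_7)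
  have w: "win (Suc (Suc 0)) (\<lambda>xs ys. io3 g h 0 (T42 ys) - io3 g h 0 (T42 xs) \<noteq> \<delta>)" for \<delta>
    by (rule win_codes[OF hom nrm nrC inj games])
  show ?thesis by (rule colorable_from_win[OF col w])
qed

lemma caseB2:
  fixes g1 g2 g3 :: "'g::ab_group_add"
  assumes all2: "\<And>x::'g. x + x = 0" and n1: "g1 \<noteq> 0" and n2: "g2 \<noteq> 0" "g2 \<noteq> g1"
    and n3: "g3 \<noteq> 0" "g3 \<noteq> g1" "g3 \<noteq> g2" "g3 \<noteq> g1 + g2"
    and col: "group_colorable V E ends TYPE(3)"
  shows "group_colorable V E ends TYPE('g)"
proof -
  define C where "C = {(i, j, l). i < (2::nat) \<and> j < (2::nat) \<and> l < (2::nat)}"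
  have n4: "nsc 4 x = 0" for x :: 'g using all2[of x] by (simp add: nsc_num add.assoc[symmetric])
  have m2: "nsc 2 x = 0" for x :: 'g using all2[of x] by (simp add: nsc_num)
  have hom: "io3 g1 g2 g3 s - io3 g1 g2 g3 t = io3 g1 g2 g3 (cd3 s t)" for s t
    by (rule io3_hom[OF n4 n4 n4])
  have nrm: "io3 g1 g2 g3 (nr3 2 2 2 s) = io3 g1 g2 g3 s" for s
    by (rule io3_nr[OF m2 m2 m2])
  have nrC: "nr3 2 2 2 s \<in> C" for s by (cases s) (simp add: nr3_def C_def)
  have neg: "- x = x" for x :: 'g by (simp only: neg_eq_iff_add_eq_0) (rule all2)
  have zero: "c = (0, 0, 0)" if "c \<in> C" "io3 g1 g2 g3 c = 0" for c
  proof -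
    from C2_cases[OF that(1)[unfolded C_def]] show ?thesis
    proof (elim disjE)
      assume "c = (1, 1, 0)"
      with that(2) have "g1 + g2 = 0" by (simp add: io3_def nsc_num)
      then have "g2 = - g1" by (simp add: add_eq_0_iff)
      then show ?thesis using neg n2 by simp
    next
      assume "c = (1, 0, 1)"
      with that(2) have "g1 + g3 = 0" by (simp add: io3_def nsc_num)
      then have "g3 = - g1" by (simp add: add_eq_0_iff)
      then show ?thesis using neg n3 by simp
    next
      assume "c = (0, 1, 1)"
      with that(2) have "g2 + g3 = 0" by (simp add: io3_def nsc_num)
      then have "g3 = - g2" by (simp add: add_eq_0_iff)
      then show ?thesis using neg n3 by simp
    next
      assume "c = (1, 1, 1)"
      with that(2) have "(g1 + g2) + g3 = 0" by (simp add: io3_def nsc_num)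
      then have "g3 = - (g1 + g2)" by (simp add: add_eq_0_iff)
      then show ?thesis using neg[of "g1 + g2"] n3 by simp
    qed (use that(2) n1 n2 n3 in \<open>simp_all add: io3_def nsc_num\<close>)
  qed
  have inj: "inj_on (io3 g1 g2 g3) C"
  proof (rule inj_onI)
    fix s t assume s: "s \<in> C" and t: "t \<in> C" and eq: "io3 g1 g2 g3 s = io3 g1 g2 g3 t"
    have "io3 g1 g2 g3 (nr3 2 2 2 (cd3 s t)) = io3 g1 g2 g3 (cd3 s t)" by (rule nrm)
    also have "\<dots> = io3 g1 g2 g3 s - io3 g1 g2 g3 t" by (rule hom[symmetric])
    also have "\<dots> = 0" using eq by simp
    finally have "io3 g1 g2 g3 (nr3 2 2 2 (cd3 s t)) = 0" .
    then have "nr3 2 2 2 (cd3 s t) = (0, 0, 0)" using zero nrC by blast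
    then show "s = t" using C2_cases[OF s[unfolded C_def]] C2_cases[OF t[unfolded C_def]] by (auto simp: nr3_def cd3_def)
  qed
  have games: "win (Suc (Suc (Suc 0))) (\<lambda>xs ys. nr3 2 2 2 (cd3 (T8 ys) (T8 xs)) \<noteq> c)" if "c \<in> C" for c
    using C2_cases[OF that[unfolded C_def]] by (elim disjE; simp only: g8_0 g8_1 g8_2 g8_3 g8_4 g8_5 g8_6 g8_7)
  have w: "win (Suc (Suc (Suc 0))) (\<lambda>xs ys. io3 g1 g2 g3 (T8 ys) - io3 g1 g2 g3 (T8 xs) \<noteq> \<delta>)" for \<delta>
    by (rule win_codes[OF hom nrm nrC inj games])
  show ?thesis by (rule colorable_from_win[OF col w])
qed

theorem mainTheorem13:
  fixes V :: "'v set" and E :: "'e set" and ends :: "'e \<Rightarrow> 'v \<times> 'v"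
  assumes "loopless_multigraph V E ends"
    and "group_colorable V E ends TYPE(3)"
    and "CARD('g::{ab_group_add, finite}) \<ge> 5"
  shows "group_colorable V E ends TYPE('g)"
proof (cases "\<exists>g::'g. g + g + g + g \<noteq> 0")
  case True
  then obtain g :: 'g where "g + g + g + g \<noteq> 0" by blast
  from caseA[OF this assms(2)] show ?thesis .
next
  case False
  then have all4: "\<And>x::'g. x + x + x + x = 0" by blast
  show ?thesis
  proof (cases "\<exists>g::'g. g + g \<noteq> 0")
    case True
    then obtain g :: 'g where g2: "g + g \<noteq> 0" by blast
    obtain h :: 'g where h: "h \<noteq> 0" "h \<noteq> g" "h \<noteq> g + g" "h \<noteq> g + g + g"
      using outside4[OF assms(3), of 0 g "g + g" "g + g + g"] by blast
    have a1: "- g = g + g + g" by (simp only: neg_eq_iff_add_eq_0) (use all4[of g] in \<open>simp add: add.assoc\<close>)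
    have a2: "- (g + g) = g + g" by (simp only: neg_eq_iff_add_eq_0) (use all4[of g] in \<open>simp add: add.assoc\<close>)
    show ?thesis
    proof (cases "h + h = 0")
      case True
      from caseB1[OF all4 g2 True h assms(2)] show ?thesis .
    next
      case hh: False
      show ?thesis
      proof (cases "h + h = g + g")
        case True
        have e: "(h - g) + (h - g) = 0"
        proof -
          have "(h - g) + (h - g) = (h + h) - (g + g)" by (simp add: algebra_simps)
          then show ?thesis using True by simp
        qed
        have "h - g \<noteq> 0" "h - g \<noteq> g" "h - g \<noteq> g + g" "h - g \<noteq> g + g + g"
          using h all4[of g] a1 by (auto simp: algebra_simps)
        from caseB1[OF all4 g2 e this assms(2)] show ?thesis .
      next
        case hg: False
        have e: "(h + h) + (h + h) = 0" using all4[of h] by (simp add: add.assoc)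
        have n1: "h + h \<noteq> g"
        proof
          assume "h + h = g"
          then have "(h + h) + (h + h) = g + g" by simp
          then show False using e g2 by simp
        qed
        have n2: "h + h \<noteq> g + g + g"
        proof
          assume "h + h = g + g + g"
          then have "(h + h) + (h + h) = (g + g + g) + (g + g + g)" by simp
          also have "\<dots> = (g + g + g + g) + (g + g)" by (simp add: algebra_simps)
          also have "\<dots> = g + g" using all4[of g] by simp
          finally show False using e g2 by simp
        qed
        from caseB1[OF all4 g2 e hh n1 hg n2 assms(2)] show ?thesis .
      qed
    qed
  next
    case False
    then have all2: "\<And>x::'g. x + x = 0" by blast
    obtain g1 :: 'g where g1: "g1 \<noteq> 0"
      using outside4[OF assms(3), of 0 0 0 0] by blast
    obtain g2 :: 'g where g2: "g2 \<noteq> 0" "g2 \<noteq> g1"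
      using outside4[OF assms(3), of 0 g1 0 0] by blast
    obtain g3 :: 'g where g3: "g3 \<noteq> 0" "g3 \<noteq> g1" "g3 \<noteq> g2" "g3 \<noteq> g1 + g2"
      using outside4[OF assms(3), of 0 g1 g2 "g1 + g2"] by blast
    from caseB2[OF all2 g1 g2 g3 assms(2)] show ?thesis .
  qed
qed

end
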